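(* Let $\psi$ be a saturation with saturation level $\alpha>0$ and $u:[0,L]\to\mathbb{R}$ a given velocity. Fix $n$ and suppose $0\le\rho_i^n\le\alpha$ for all $i=1,\dots,M$. If $(\rho_i^{n+1})_{i=1}^M$ satisfies the implicit scheme $$\frac{\rho_i^{n+1}-\rho_i^n}{\Delta t}+\frac{F_{i+1/2}^{n+1}-F_{i-1/2}^{n+1}}{\Delta x}=0,\qquad F_{i+1/2}^{n+1}=\rho_i^{n+1}(\psi_{i+1}^{n+1})^+u_{i+1/2}^++\rho_{i+1}^{n+1}(\psi_i^{n+1})^+u_{i+1/2}^-,$$ with $\psi_i^{n}=\psi(\rho_i^{n})$, $u_{i+1/2}=u(x_{i+1/2})$, and no-flux boundary conditions $F_{1/2}^{n+1}=F_{M+1/2}^{n+1}=0$, then $0\le\rho_i^{n+1}\le\alpha$ for all $i$, for any $\Delta t>0$ and $\Delta x>0$ (unconditionally).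
   Context: A saturation is a continuous function $\psi:[0,\infty)\to\mathbb{R}$ that is non-increasing and for which there is $\alpha>0$ (the saturation level) with $\psi(\alpha)=0$ and $(\alpha-s)\psi(s)>0$ for $s\neq\alpha$. Discretisation of $(0,L)$: $\Delta x=L/M$, cells with centres $x_i=\Delta x(i-1/2)$ and interfaces $x_{i+1/2}$, $i=1,\dots,M$; time step $\Delta t$; $\rho_i^n$ denotes the value on cell $i$ at time $t^n=n\Delta t$. Here $a^+=\max\{a,0\}$ and $a^-=\min\{a,0\}$. (This is a scheme for $\partial_t\rho+\partial_x(\rho\psi(\rho)u(x))=0$.) *)

theory Defs
  imports "HOL-Analysis.Analysis"
begin

definition saturation :: "(real \<Rightarrow> real) \<Rightarrow> real \<Rightarrow> bool" where
  "saturation \<psi> \<alpha> \<longleftrightarrow>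
     continuous_on {0..} \<psi> \<and>
     (\<forall>s\<in>{0..}. \<forall>t\<in>{0..}. s \<le> t \<longrightarrow> \<psi> t \<le> \<psi> s) \<and>
     \<alpha> > 0 \<and> \<psi> \<alpha> = 0 \<and>
     (\<forall>s\<in>{0..}. s \<noteq> \<alpha> \<longrightarrow> (\<alpha> - s) * \<psi> s > 0)"

definition pos_part :: "real \<Rightarrow> real" where "pos_part a = max a 0"
definition neg_part :: "real \<Rightarrow> real" where "neg_part a = min a 0"

text \<open>Numerical flux F at interface x_(i+1/2) = dx * i, for i = 0..M, with cells 1..M;
  no-flux boundary: F at i = 0 and i = M vanishes.\<close>
definition num_flux ::
  "(real \<Rightarrow> real) \<Rightarrow> (real \<Rightarrow> real) \<Rightarrow> real \<Rightarrow> nat \<Rightarrow> (nat \<Rightarrow> real) \<Rightarrow> nat \<Rightarrow> real" where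
  "num_flux \<psi> u dx M \<rho> i =
     (if i = 0 \<or> M \<le> i then 0
      else \<rho> i * pos_part (\<psi> (\<rho> (i + 1))) * pos_part (u (dx * real i))
         + \<rho> (i + 1) * pos_part (\<psi> (\<rho> i)) * neg_part (u (dx * real i)))"

end

theory Submission
  imports Defs
begin

lemma sbp:
  fixes F c :: "nat \<Rightarrow> real"
  assumes "F 0 = 0"
  shows "(\<Sum>i=1..M. c i * (F i - F (i - 1))) = (\<Sum>j=1..M. (c j - c (j+1)) * F j) + c (M+1) * F M"
  by (induction M) (simp_all add: assms algebra_simps)

lemma neg_sum:
  fixes g :: "nat \<Rightarrow> real"
  assumes "finite A" "\<forall>i\<in>A. g i \<le> 0" "k \<in> A" "g k < 0"
  shows "(\<Sum>i\<in>A. g i) < 0"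
proof -
  have "(\<Sum>i\<in>A. g i) = g k + (\<Sum>i\<in>A - {k}. g i)" using assms by (simp add: sum.remove)
  moreover have "(\<Sum>i\<in>A - {k}. g i) \<le> 0" using assms by (intro sum_nonpos) auto
  ultimately show ?thesis using assms by linarith
qed

lemma key:
  fixes F c rn r :: "nat \<Rightarrow> real" and dt dx :: real and M :: nat
  assumes dt: "dt > 0" and dx: "dx > 0" and F0: "F 0 = 0" and FM: "F M = 0"
    and eq: "\<forall>i\<in>{1..M}. (r i - rn i) / dt + (F i - F (i - 1)) / dx = 0"
  shows "(\<Sum>i=1..M. c i * (r i - rn i)) = - (dt/dx) * (\<Sum>j=1..M. (c j - c (j+1)) * F j)"
proof -
  have e: "r i - rn i = - (dt/dx) * (F i - F (i - 1))" if "i \<in> {1..M}" for i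
  proof -
    have "(r i - rn i) / dt + (F i - F (i - 1)) / dx = 0" using eq that by blast
    then show ?thesis using dt dx by (simp add: field_simps)
  qed
  have "(\<Sum>i=1..M. c i * (r i - rn i)) = (\<Sum>i=1..M. - (dt/dx) * (c i * (F i - F (i - 1))))"
    by (rule sum.cong) (auto simp: e)
  also have "\<dots> = - (dt/dx) * (\<Sum>i=1..M. c i * (F i - F (i - 1)))"
    by (simp add: sum_distrib_left)
  also have "\<dots> = - (dt/dx) * (\<Sum>j=1..M. (c j - c (j+1)) * F j)"
    using sbp[of F c M] F0 FM by simp
  finally show ?thesis .
qed

theorem proposition2p6:
  fixes \<psi> u :: "real \<Rightarrow> real" and \<alpha> L dt :: real and M :: nat
    and rho_n rho_n1 :: "nat \<Rightarrow> real"
  assumes sat: "saturation \<psi> \<alpha>"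
    and L: "L > 0" and M: "M \<ge> 1" and dt: "dt > 0"
    and init: "\<forall>i\<in>{1..M}. 0 \<le> rho_n i \<and> rho_n i \<le> \<alpha>"
    and scheme: "\<forall>i\<in>{1..M}.
        (rho_n1 i - rho_n i) / dt
        + (num_flux \<psi> u (L / real M) M rho_n1 i - num_flux \<psi> u (L / real M) M rho_n1 (i - 1))
          / (L / real M) = 0"
  shows "\<forall>i\<in>{1..M}. 0 \<le> rho_n1 i \<and> rho_n1 i \<le> \<alpha>"
proof -
  define dx where "dx = L / real M"
  define F where "F = num_flux \<psi> u dx M rho_n1"
  have dx: "dx > 0" using L M by (simp add: dx_def)
  have F0: "F 0 = 0" and FM: "F M = 0" by (simp_all add: F_def num_flux_def)
  have eq: "\<forall>i\<in>{1..M}. (rho_n1 i - rho_n i) / dt + (F i - F (i - 1)) / dx = 0"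
    using scheme by (simp add: F_def dx_def)
  have Fj: "F j = rho_n1 j * pos_part (\<psi> (rho_n1 (j + 1))) * pos_part (u (dx * real j))
         + rho_n1 (j + 1) * pos_part (\<psi> (rho_n1 j)) * neg_part (u (dx * real j))"
    if "1 \<le> j" "j < M" for j using that by (simp add: F_def num_flux_def)
  have pp: "pos_part a \<ge> 0" for a by (simp add: pos_part_def)
  have np: "neg_part a \<le> 0" for a by (simp add: neg_part_def)
  have sa: "\<alpha> > 0" and sneg: "\<And>s. s > \<alpha> \<Longrightarrow> \<psi> s < 0"
  proof -
    show "\<alpha> > 0" using sat by (simp add: saturation_def)
    fix s assume s: "s > \<alpha>"
    have "(\<alpha> - s) * \<psi> s > 0" using sat s \<open>\<alpha> > 0\<close> unfolding saturation_def by auto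
    then show "\<psi> s < 0" using s by (simp add: zero_less_mult_iff)
  qed
  have lower: "\<forall>i\<in>{1..M}. 0 \<le> rho_n1 i"
  proof (rule ccontr)
    assume "\<not> ?thesis"
    then obtain k where k: "k \<in> {1..M}" "rho_n1 k < 0" by auto
    define c where "c i = (if rho_n1 i < 0 then 1 else (0::real))" for i
    have K: "(\<Sum>i=1..M. c i * (rho_n1 i - rho_n i)) = - (dt/dx) * (\<Sum>j=1..M. (c j - c (j+1)) * F j)"
      by (rule key[OF dt dx F0 FM eq])
    have T: "(c j - c (j+1)) * F j \<le> 0" if j: "j \<in> {1..M}" for j
    proof (cases "j = M")
      case True then show ?thesis using FM by simp
    next
      case False
      then have j1: "1 \<le> j" "j < M" using j by auto
      let ?a = "pos_part (\<psi> (rho_n1 (j + 1)))" and ?b = "pos_part (u (dx * real j))"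
      let ?c = "pos_part (\<psi> (rho_n1 j))" and ?d = "neg_part (u (dx * real j))"
      have ab: "?a * ?b \<ge> 0" "?c * ?d \<le> 0" using pp np by (auto simp: mult_nonneg_nonpos)
      show ?thesis
      proof (cases "rho_n1 j < 0")
        case True
        show ?thesis
        proof (cases "rho_n1 (j+1) < 0")
          case True then show ?thesis using \<open>rho_n1 j < 0\<close> by (simp add: c_def)
        next
          case False
          have "rho_n1 j * (?a * ?b) \<le> 0" using True ab by (simp add: mult_nonpos_nonneg)
          moreover have "rho_n1 (j+1) * (?c * ?d) \<le> 0" using False ab by (simp add: mult_nonneg_nonpos)
          ultimately have "F j \<le> 0" using Fj[OF j1] by (simp add: mult.assoc)
          then show ?thesis using True False by (simp add: c_def)
        qed
      next
        case False
        show ?thesis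
        proof (cases "rho_n1 (j+1) < 0")
          case True
          have "rho_n1 j * (?a * ?b) \<ge> 0" using False ab by simp
          moreover have "rho_n1 (j+1) * (?c * ?d) \<ge> 0" using True ab by (simp add: mult_nonpos_nonpos)
          ultimately have "F j \<ge> 0" using Fj[OF j1] by (simp add: mult.assoc)
          then show ?thesis using True False by (simp add: c_def)
        next
          case False then show ?thesis using \<open>\<not> rho_n1 j < 0\<close> by (simp add: c_def)
        qed
      qed
    qed
    have "(\<Sum>j=1..M. (c j - c (j+1)) * F j) \<le> 0" using T by (intro sum_nonpos) auto
    moreover have "dt/dx > 0" using dt dx by simp
    ultimately have "(dt/dx) * (\<Sum>j=1..M. (c j - c (j+1)) * F j) \<le> 0"
      by (metis less_eq_real_def mult_nonneg_nonpos)
    then have ge: "(\<Sum>i=1..M. c i * (rho_n1 i - rho_n i)) \<ge> 0" using K by linarith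
    have "(\<Sum>i=1..M. c i * (rho_n1 i - rho_n i)) < 0"
    proof (rule neg_sum)
      show "\<forall>i\<in>{1..M}. c i * (rho_n1 i - rho_n i) \<le> 0" using init by (auto simp: c_def)
      show "c k * (rho_n1 k - rho_n k) < 0" 
      proof -
        have "rho_n k \<ge> 0" using init k(1) by blast
        moreover have "c k = 1" using k(2) by (simp add: c_def)
        ultimately show ?thesis using k(2) by simp
      qed
    qed (use k in auto)
    then show False using ge by linarith
  qed
  have upper: "\<forall>i\<in>{1..M}. rho_n1 i \<le> \<alpha>"
  proof (rule ccontr)
    assume "\<not> ?thesis"
    then obtain k where k: "k \<in> {1..M}" "rho_n1 k > \<alpha>" by auto
    define c where "c i = (if rho_n1 i > \<alpha> then 1 else (0::real))" for i
    have K: "(\<Sum>i=1..M. c i * (rho_n1 i - rho_n i)) = - (dt/dx) * (\<Sum>j=1..M. (c j - c (j+1)) * F j)"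
      by (rule key[OF dt dx F0 FM eq])
    have T: "(c j - c (j+1)) * F j \<ge> 0" if j: "j \<in> {1..M}" for j
    proof (cases "j = M")
      case True then show ?thesis using FM by simp
    next
      case False
      then have j1: "1 \<le> j" "j < M" using j by auto
      have r0: "rho_n1 j \<ge> 0" "rho_n1 (j+1) \<ge> 0" using lower j1 by auto
      let ?a = "pos_part (\<psi> (rho_n1 (j + 1)))" and ?b = "pos_part (u (dx * real j))"
      let ?c = "pos_part (\<psi> (rho_n1 j))" and ?d = "neg_part (u (dx * real j))"
      have ab: "?a * ?b \<ge> 0" "?c * ?d \<le> 0" using pp np by (auto simp: mult_nonneg_nonpos)
      show ?thesis
      proof (cases "rho_n1 j > \<alpha>")
        case True
        show ?thesis
        proof (cases "rho_n1 (j+1) > \<alpha>")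
          case True then show ?thesis using \<open>rho_n1 j > \<alpha>\<close> by (simp add: c_def)
        next
          case False
          have "?c = 0" using sneg[OF True] by (simp add: pos_part_def)
          moreover have "rho_n1 j * (?a * ?b) \<ge> 0" using r0 ab by simp
          ultimately have "F j \<ge> 0" using Fj[OF j1] by (simp add: mult.assoc)
          then show ?thesis using True False by (simp add: c_def)
        qed
      next
        case False
        show ?thesis
        proof (cases "rho_n1 (j+1) > \<alpha>")
          case True
          have "?a = 0" using sneg[OF True] by (simp add: pos_part_def)
          moreover have "rho_n1 (j+1) * (?c * ?d) \<le> 0" using r0 ab by (simp add: mult_nonneg_nonpos)
          ultimately have "F j \<le> 0" using Fj[OF j1] by (simp add: mult.assoc)
          then show ?thesis using True False by (simp add: c_def mult_nonpos_nonpos)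
        next
          case False then show ?thesis using \<open>\<not> rho_n1 j > \<alpha>\<close> by (simp add: c_def)
        qed
      qed
    qed
    have "(\<Sum>j=1..M. (c j - c (j+1)) * F j) \<ge> 0" using T by (intro sum_nonneg) auto
    moreover have "dt/dx > 0" using dt dx by simp
    ultimately have "(dt/dx) * (\<Sum>j=1..M. (c j - c (j+1)) * F j) \<ge> 0"
      by (metis less_eq_real_def mult_nonneg_nonneg)
    then have le: "(\<Sum>i=1..M. c i * (rho_n1 i - rho_n i)) \<le> 0" using K by linarith
    have "(\<Sum>i=1..M. - (c i * (rho_n1 i - rho_n i))) < 0"
    proof (rule neg_sum)
      show "\<forall>i\<in>{1..M}. - (c i * (rho_n1 i - rho_n i)) \<le> 0" using init by (auto simp: c_def)
      show "- (c k * (rho_n1 k - rho_n k)) < 0" 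
      proof -
        have "rho_n k \<le> \<alpha>" using init k(1) by blast
        moreover have "c k = 1" using k(2) by (simp add: c_def)
        ultimately show ?thesis using k(2) by simp
      qed
    qed (use k in auto)
    then show False using le by (simp add: sum_negf)
  qed
  show ?thesis using lower upper by auto
qed

end
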